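(* Fix $\mu\in(-1,1)$ and let $u^\xi\in\mathcal M_\mu$. The matrix $S=(S_{kj})_{k,j=1}^N$, $S_{kj}=\langle u^\xi_k,u^\xi_j\rangle$, is invertible with $$S^{-1}_{kj}=\frac{\varepsilon}{\mathcal X}\Big[\delta_{kj}+\frac{1}{N+1}(-1)^{k+j+1}\Big]+\mathcal O(\exp).$$
   Context: $0<\varepsilon\ll1$; $f(u)=u^3-u$; $\langle\cdot,\cdot\rangle$ inner product of $L^2(0,1)$. $U(x)=\tanh(x/\sqrt2)$; $U(x;\xi,\pm1)=\pm U((x-\xi)/\varepsilon)$; $\mathcal X=\int_{\mathbb R}U'(y)^2dy$. Fix an integer $N\ge1$, small $\kappa_0>0$, $\rho_\varepsilon=\varepsilon^{\kappa_0}$. $\Omega_{\rho_\varepsilon}=\{h\in\mathbb R^{N+1}:0<h_1<\dots<h_{N+1}<1,\ \min_{j=0,\dots,N+1}|h_{j+1}-h_j|>\varepsilon/\rho_\varepsilon\}$ with $h_0=-h_1$, $h_{N+2}=2-h_{N+1}$. For $h\in\Omega_{\rho_\varepsilon}$, $u^h=\sum_{j=1}^{N+1}U(\cdot;h_j,(-1)^{j+1})+\beta_N$, where $\beta_N=\frac{(-1)^N-1}{2}+\mathcal O(\exp)$ (also for derivatives) makes $u^h(0)=-1$ and $u^h$ satisfy Neumann boundary conditions; $\mathcal O(\exp)$ means exponentially small in $\varepsilon$. $\mathcal M=\{u^h:h\in\Omega_{\rho_\varepsilon}\}$, $\mathcal M_\mu=\{u^h\in\mathcal M:\int_0^1u^h=\mu\}$.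 There is a smooth map $h_{N+1}:[0,1]^N\to\mathbb R$ such that $u^h\in\mathcal M_\mu$ iff $h=(\xi,h_{N+1}(\xi))\in\Omega_{\rho_\varepsilon}$, $\xi=(h_1,\dots,h_N)$, and $\partial h_{N+1}/\partial h_i=(-1)^{N-i}+\mathcal O(\exp)$. $u^\xi=u^{(\xi,h_{N+1}(\xi))}$, $u^\xi_k=\partial_{\xi_k}u^\xi$. *)

theory Defs
  imports "HOL-Analysis.Analysis" "Jordan_Normal_Form.Matrix"
begin

text \<open>Parameters: eps (the small parameter),
  ka0 (the exponent kappa_0), N (number of interior layers minus one).
  Points h of R^(N+1) are represented as functions nat => real, only the
  entries h 1, ..., h (N+1) being relevant; xi in R^N likewise uses xi 1..xi N.\<close>

definition U :: "real \<Rightarrow> real" where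
  "U x = tanh (x / sqrt 2)"

definition Ushift :: "real \<Rightarrow> real \<Rightarrow> real \<Rightarrow> real \<Rightarrow> real" where
  "Ushift eps xi s x = s * U ((x - xi) / eps)"

definition chiX :: real where
  "chiX = integral UNIV (\<lambda>y. (deriv U y)\<^sup>2)"

definition rho :: "real \<Rightarrow> real \<Rightarrow> real" where
  "rho ka0 eps = eps powr ka0"

definition L2inner :: "(real \<Rightarrow> real) \<Rightarrow> (real \<Rightarrow> real) \<Rightarrow> real" where
  "L2inner f g = integral {0..1} (\<lambda>x. f x * g x)"

definition hext :: "nat \<Rightarrow> (nat \<Rightarrow> real) \<Rightarrow> nat \<Rightarrow> real" where
  "hext N h j = (if j = 0 then - h 1 else if j = N + 2 then 2 - h (N + 1) else h j)"

definition Omega :: "nat \<Rightarrow> real \<Rightarrow> real \<Rightarrow> (nat \<Rightarrow> real) set" where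
  "Omega N ka0 eps = {h. 0 < h 1 \<and> (\<forall>j\<in>{1..N}. h j < h (j + 1)) \<and> h (N + 1) < 1 \<and>
      (\<forall>j\<in>{0..N+1}. hext N h (j + 1) - hext N h j > eps / rho ka0 eps)}"

text \<open>Exponentially small bound: a quantity is O(exp) if it is bounded by
  K * exp(-c / rho_eps) = K * exp(-c * eps powr (-ka0)) for constants K, c > 0.\<close>
definition expbound :: "real \<Rightarrow> real \<Rightarrow> real \<Rightarrow> real \<Rightarrow> real" where
  "expbound ka0 K c eps = K * exp (- c / rho ka0 eps)"

text \<open>u^h = sum_{j=1}^{N+1} U(.; h_j, (-1)^(j+1)) + beta_N, where the correction
  beta_N = beta eps h x is a parameter of the construction.\<close>
definition uh :: "nat \<Rightarrow> (real \<Rightarrow> (nat \<Rightarrow> real) \<Rightarrow> real \<Rightarrow> real) \<Rightarrow> real \<Rightarrow> (nat \<Rightarrow> real) \<Rightarrow> real \<Rightarrow> real" where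
  "uh N beta eps h x = (\<Sum>j = 1..N+1. Ushift eps (h j) ((-1) ^ (j + 1)) x) + beta eps h x"

definition hxi :: "nat \<Rightarrow> (real \<Rightarrow> (nat \<Rightarrow> real) \<Rightarrow> real) \<Rightarrow> real \<Rightarrow> (nat \<Rightarrow> real) \<Rightarrow> nat \<Rightarrow> real" where
  "hxi N hN1 eps xi = xi(N + 1 := hN1 eps xi)"

definition uxi :: "nat \<Rightarrow> (real \<Rightarrow> (nat \<Rightarrow> real) \<Rightarrow> real \<Rightarrow> real) \<Rightarrow> (real \<Rightarrow> (nat \<Rightarrow> real) \<Rightarrow> real) \<Rightarrow> real \<Rightarrow> (nat \<Rightarrow> real) \<Rightarrow> real \<Rightarrow> real" where
  "uxi N beta hN1 eps xi = uh N beta eps (hxi N hN1 eps xi)"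

definition uxi_k :: "nat \<Rightarrow> (real \<Rightarrow> (nat \<Rightarrow> real) \<Rightarrow> real \<Rightarrow> real) \<Rightarrow> (real \<Rightarrow> (nat \<Rightarrow> real) \<Rightarrow> real) \<Rightarrow> real \<Rightarrow> (nat \<Rightarrow> real) \<Rightarrow> nat \<Rightarrow> real \<Rightarrow> real" where
  "uxi_k N beta hN1 eps xi k x = deriv (\<lambda>t. uxi N beta hN1 eps (xi(k := t)) x) (xi k)"

text \<open>The N x N matrix S_{kj} = <u^xi_k, u^xi_j>, indices k,j = 1..N stored at 0..N-1.\<close>
definition Smat :: "nat \<Rightarrow> (real \<Rightarrow> (nat \<Rightarrow> real) \<Rightarrow> real \<Rightarrow> real) \<Rightarrow> (real \<Rightarrow> (nat \<Rightarrow> real) \<Rightarrow> real) \<Rightarrow> real \<Rightarrow> (nat \<Rightarrow> real) \<Rightarrow> real mat" where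
  "Smat N beta hN1 eps xi =
     mat N N (\<lambda>(k, j). L2inner (uxi_k N beta hN1 eps xi (k + 1)) (uxi_k N beta hN1 eps xi (j + 1)))"

end

theory Submission
  imports Defs "Jordan_Normal_Form.Determinant" "HOL-Real_Asymp.Real_Asymp"
begin


definition Ud :: "real \<Rightarrow> real" where "Ud y = (1 - (U y)\<^sup>2) / sqrt 2"
definition FF :: "real \<Rightarrow> real" where "FF y = (U y - (U y)^3/3) / sqrt 2"

lemma sqrt2_eq: "2 / sqrt 2 = sqrt 2"
  by (simp add: real_div_sqrt)

lemma U_deriv: "(U has_real_derivative Ud y) (at y)"
proof -
  have "((\<lambda>x. tanh (x / sqrt 2)) has_real_derivative (1 - (tanh (y/sqrt 2))\<^sup>2) * (1 / sqrt 2)) (at y)"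
    by (rule has_field_derivative_tanh[OF _ DERIV_cdivide[OF DERIV_ident]]) simp
  moreover have "(1 - (tanh (y/sqrt 2))\<^sup>2) * (1 / sqrt 2) = Ud y" by (simp add: Ud_def U_def)
  ultimately have "((\<lambda>x. tanh (x / sqrt 2)) has_real_derivative Ud y) (at y)" by simp
  then show ?thesis unfolding U_def[abs_def] .
qed

lemma deriv_U: "deriv U = Ud"
  using U_deriv DERIV_imp_deriv by blast

lemma U_bounds: "-1 < U y" "U y < 1"
  unfolding U_def using tanh_real_bounds by auto

lemma U_sq_le: "(U y)\<^sup>2 \<le> 1"
  unfolding abs_square_le_1 using U_bounds[of y] by (simp add: abs_le_iff)

lemma Ud_nonneg: "0 \<le> Ud y"
  using U_sq_le[of y] by (simp add: Ud_def)

lemma Ud_le_diff: "Ud y \<le> 1 - (U y)\<^sup>2"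
proof -
  have "0 \<le> 1 - (U y)\<^sup>2" using U_sq_le[of y] by simp
  then have "(1 - (U y)\<^sup>2) / sqrt 2 \<le> (1 - (U y)\<^sup>2) / 1"
    by (intro divide_left_mono) auto
  then show ?thesis by (simp add: Ud_def)
qed

lemma Ud_le1: "Ud y \<le> 1"
  using Ud_le_diff[of y] zero_le_power2[of "U y"] by linarith

lemma tanh_sq_bound: "1 - (tanh w)\<^sup>2 \<le> 4 * exp (- 2 * \<bar>w::real\<bar>)"
proof -
  define e where "e = exp (-2*w)"
  have e: "e > 0" by (simp add: e_def)
  have t: "tanh w = (1 - e) / (1 + e)" by (simp add: tanh_real_altdef e_def)
  have ne: "1 + (e * e + e * 2) \<noteq> 0" using e mult_pos_pos[OF e e] by linarith
  have eq: "1 - (tanh w)\<^sup>2 = 4 * e / (1 + e)\<^sup>2"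
    using e ne by (simp add: t field_simps power2_eq_square)
  have pos: "0 < (1 + e)\<^sup>2" using e by simp
  have one: "1 \<le> (1 + e)\<^sup>2" using e by (intro one_le_power) simp
  have b1: "4 * e / (1 + e)\<^sup>2 \<le> 4 * e / 1"
    using e one by (intro divide_left_mono) auto
  have ee: "e * e \<le> (1 + e)\<^sup>2" using e by (simp add: power2_eq_square algebra_simps)
  have r: "4 * e / (1 + e)\<^sup>2 = (4 / e) * (e * e / (1 + e)\<^sup>2)" using e by (simp add: field_simps)
  have "e * e / (1 + e)\<^sup>2 \<le> 1" using ee pos by simp
  then have b2: "4 * e / (1 + e)\<^sup>2 \<le> 4 / e" unfolding r using e
    by (intro mult_left_le) auto
  show ?thesis
  proof (cases "w \<ge> 0")
    case True then show ?thesis using b1 eq by (simp add: e_def)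
  next
    case False
    have "4 / e = 4 * exp (2 * w)" by (simp add: e_def exp_minus field_simps)
    then show ?thesis using b2 eq False by simp
  qed
qed

lemma Ud_exp: "Ud y \<le> 4 * exp (- \<bar>y\<bar>)"
proof -
  have "Ud y \<le> 1 - (U y)\<^sup>2" by (rule Ud_le_diff)
  also have "\<dots> \<le> 4 * exp (- 2 * \<bar>y / sqrt 2\<bar>)" unfolding U_def by (rule tanh_sq_bound)
  also have "\<dots> \<le> 4 * exp (- \<bar>y\<bar>)"
  proof -
    have "2 * \<bar>y / sqrt 2\<bar> = (2 / sqrt 2) * \<bar>y\<bar>" by (simp add: abs_div)
    then have "2 * \<bar>y / sqrt 2\<bar> = sqrt 2 * \<bar>y\<bar>" by (simp only: sqrt2_eq)
    moreover have "\<bar>y\<bar> \<le> sqrt 2 * \<bar>y\<bar>" by (simp add: mult_le_cancel_right1)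
    ultimately show ?thesis by simp
  qed
  finally show ?thesis .
qed

lemma FF_deriv: "(FF has_real_derivative (Ud y)\<^sup>2) (at y)"
proof -
  have d3: "((\<lambda>y. U y ^ 3) has_real_derivative of_nat 3 * (Ud y * U y ^ (3 - Suc 0))) (at y)"
    by (rule DERIV_power[OF U_deriv])
  have "((\<lambda>y. (U y - U y ^ 3 / 3) / sqrt 2) has_real_derivative
          (Ud y - of_nat 3 * (Ud y * U y ^ (3 - Suc 0)) / 3) / sqrt 2) (at y)"
    by (intro DERIV_cdivide DERIV_diff U_deriv d3)
  moreover have "(Ud y - of_nat 3 * (Ud y * U y ^ (3 - Suc 0)) / 3) / sqrt 2 = (Ud y)\<^sup>2"
    by (simp add: Ud_def power2_eq_square field_simps)
  ultimately show ?thesis by (simp add: FF_def[abs_def])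
qed

lemma U_top: "(U \<longlongrightarrow> 1) at_top"
proof -
  have "filterlim (\<lambda>x::real. inverse (sqrt 2) * x) at_top at_top"
    by (rule filterlim_tendsto_pos_mult_at_top[OF tendsto_const]) (auto simp: filterlim_ident)
  then have "filterlim (\<lambda>x::real. x / sqrt 2) at_top at_top" by (simp add: divide_inverse mult.commute)
  then show ?thesis unfolding U_def[abs_def]
    using tanh_real_at_top filterlim_compose by blast
qed

lemma U_bot: "(U \<longlongrightarrow> -1) at_bot"
proof -
  have "((\<lambda>x. - U x) \<longlongrightarrow> -1) at_top" by (intro tendsto_intros U_top)
  then have "((\<lambda>x. U (- x)) \<longlongrightarrow> -1) at_top" by (simp add: U_def)
  then show ?thesis by (simp add: filterlim_at_bot_mirror)
qed

definition Finf :: real where "Finf = (2/3) / sqrt 2"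

lemma FF_top: "(FF \<longlongrightarrow> Finf) at_top"
proof -
  have "((\<lambda>y. (U y - (U y)^3/3) / sqrt 2) \<longlongrightarrow> (1 - 1^3/3) / sqrt 2) at_top"
    by (intro tendsto_intros U_top) auto
  then show ?thesis by (simp add: FF_def[abs_def] Finf_def)
qed

lemma FF_bot: "(FF \<longlongrightarrow> - Finf) at_bot"
proof -
  have "((\<lambda>y. (U y - (U y)^3/3) / sqrt 2) \<longlongrightarrow> ((-1) - (-1)^3/3) / sqrt 2) at_bot"
    by (intro tendsto_intros U_bot) auto
  then show ?thesis by (simp add: FF_def[abs_def] Finf_def)
qed

lemma chiX_val: "chiX = 2 * Finf"
proof -
  have cont: "isCont (\<lambda>y. (Ud y)\<^sup>2) x" for x
  proof -
    have "isCont Ud x"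
    proof -
      have "isCont U x" using U_deriv DERIV_isCont by blast
      then show ?thesis unfolding Ud_def[abs_def] by (intro continuous_intros) auto
    qed
    then show ?thesis by (intro continuous_intros)
  qed
  have A: "((FF \<circ> real_of_ereal) \<longlongrightarrow> - Finf) (at_right (-\<infinity>))"
    unfolding ereal_tendsto_simps using FF_bot .
  have B: "((FF \<circ> real_of_ereal) \<longlongrightarrow> Finf) (at_left \<infinity>)"
    unfolding ereal_tendsto_simps using FF_top .
  have d: "\<And>x. -\<infinity> < ereal x \<Longrightarrow> ereal x < \<infinity> \<Longrightarrow> DERIV FF x :> (Ud x)\<^sup>2" using FF_deriv by blast
  have c: "\<And>x. -\<infinity> < ereal x \<Longrightarrow> ereal x < \<infinity> \<Longrightarrow> isCont (\<lambda>y. (Ud y)\<^sup>2) x" using cont by blast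
  have AE: "AE x in lborel. -\<infinity> < ereal x \<longrightarrow> ereal x < \<infinity> \<longrightarrow> 0 \<le> (Ud x)\<^sup>2" by simp
  have lt: "(-\<infinity>::ereal) < \<infinity>" by simp
  note I = interval_integral_FTC_nonneg[OF lt d c AE A B]
  have "integral UNIV (\<lambda>y. (Ud y)\<^sup>2) = (LINT y:UNIV|lborel. (Ud y)\<^sup>2)"
    using set_borel_integral_eq_integral(2)[OF I(1)] by (simp add: einterval_eq_UNIV)
  also have "\<dots> = Finf - (- Finf)" using I(2) by (simp add: interval_lebesgue_integral_def einterval_eq_UNIV)
  finally show ?thesis unfolding chiX_def deriv_U by simp
qed

lemma isCont_Ud: "isCont Ud x"
proof -
  have "isCont U x" using U_deriv DERIV_isCont by blast
  then show ?thesis unfolding Ud_def[abs_def] by (intro continuous_intros) auto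
qed

lemma contUd: "continuous_on S (\<lambda>x. Ud ((x - a) / e))"
proof (cases "e = 0")
  case True then show ?thesis by simp
next
  case False
  have "continuous_on UNIV Ud" by (simp add: continuous_at_imp_continuous_on isCont_Ud)
  then show ?thesis
    by (rule continuous_on_compose2[of UNIV Ud]) (use False in \<open>auto intro!: continuous_intros\<close>)
qed

lemma U_minus: "U (- z) = - U z"
  by (simp add: U_def)

lemma FF_minus: "FF (- z) = - FF z"
  unfolding FF_def U_minus by (simp add: field_simps)

lemma one_minus_U: assumes "0 \<le> z" shows "1 - U z \<le> 2 * exp (- z)"
proof -
  define w where "w = z / sqrt 2"
  define e where "e = exp (-2*w)"
  have e: "e > 0" by (simp add: e_def)
  have t: "U z = (1 - e) / (1 + e)" by (simp add: U_def tanh_real_altdef e_def w_def)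
  have "1 - U z = 2 * e / (1 + e)" using e by (simp add: t field_simps)
  also have "\<dots> \<le> 2 * e" using e by (simp add: field_simps)
  also have "e \<le> exp (- z)"
  proof -
    have "2 * w = sqrt 2 * z" unfolding w_def using real_div_sqrt[of 2] by (simp add: field_simps)
    moreover have "z \<le> sqrt 2 * z" using assms by (simp add: mult_le_cancel_right1)
    ultimately show ?thesis unfolding e_def by simp
  qed
  finally show ?thesis by simp
qed

lemma FF_tail: assumes "0 \<le> z" shows "0 \<le> Finf - FF z" "Finf - FF z \<le> 4 * exp (- z)"
proof -
  have eq: "Finf - FF z = (1 - U z)\<^sup>2 * (2 + U z) / (3 * sqrt 2)"
    by (simp add: Finf_def FF_def field_simps power2_eq_square power3_eq_cube)
  have u1: "-1 < U z" "U z < 1" using U_bounds by auto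
  show "0 \<le> Finf - FF z" unfolding eq using u1 by simp
  have a: "(2 + U z) / (3 * sqrt 2) \<le> 1"
  proof -
    have "1 \<le> sqrt 2" by simp
    then have "3 \<le> 3 * sqrt 2" by simp
    then have "2 + U z \<le> 3 * sqrt 2" using u1 by linarith
    then show ?thesis by (simp add: divide_le_eq)
  qed
  have "(1 - U z) * (1 - U z) \<le> 2 * (1 - U z)" by (rule mult_right_mono) (use u1 in auto)
  then have b: "(1 - U z)\<^sup>2 \<le> 2 * (1 - U z)" by (simp add: power2_eq_square)
  have "Finf - FF z \<le> (1 - U z)\<^sup>2"
    unfolding eq using a u1 by (simp add: mult_left_le divide_le_eq)
  also have "\<dots> \<le> 2 * (1 - U z)" by (rule b)
  also have "\<dots> \<le> 4 * exp (- z)" using one_minus_U[OF assms] by simp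
  finally show "Finf - FF z \<le> 4 * exp (- z)" .
qed

lemma int_sq: assumes "0 < e"
  shows "((\<lambda>x. (Ud ((x - a) / e))\<^sup>2) has_integral e * (FF ((1 - a) / e) - FF ((0 - a) / e))) {0..1}"
proof -
  have d: "((\<lambda>x. e * FF ((x - a) / e)) has_real_derivative (Ud ((x - a) / e))\<^sup>2) (at x within {0..1})" for x
  proof -
    have "((\<lambda>x. FF ((x - a) / e)) has_real_derivative (Ud ((x - a) / e))\<^sup>2 * (1 / e)) (at x within {0..1})"
      by (rule DERIV_chain2[OF FF_deriv]) (use assms in \<open>auto intro!: derivative_eq_intros\<close>)
    then have "((\<lambda>x. e * FF ((x - a) / e)) has_real_derivative e * ((Ud ((x - a) / e))\<^sup>2 * (1 / e))) (at x within {0..1})"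
      by (rule DERIV_cmult)
    then show ?thesis using assms by simp
  qed
  have "((\<lambda>x. (Ud ((x - a) / e))\<^sup>2) has_integral (e * FF ((1 - a) / e) - e * FF ((0 - a) / e))) {0..1}"
    by (rule fundamental_theorem_of_calculus) (auto simp: has_real_derivative_iff_has_vector_derivative[symmetric] intro: d)
  then show ?thesis by (simp add: algebra_simps)
qed

lemma sq_est: assumes "0 < e" "e \<le> 1" "0 < d" "d \<le> a" "d \<le> 1 - a"
  shows "\<bar>integral {0..1} (\<lambda>x. Ud ((x - a) / e) * Ud ((x - a) / e)) - e * chiX\<bar> \<le> 8 * exp (- d / e)"
proof -
  have I: "integral {0..1} (\<lambda>x. Ud ((x - a) / e) * Ud ((x - a) / e)) = e * (FF ((1 - a) / e) - FF ((0 - a) / e))"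
    using int_sq[OF assms(1), of a] by (simp add: integral_unique power2_eq_square)
  have z1: "d / e \<le> (1 - a) / e" and z0: "d / e \<le> a / e"
    using assms by (auto simp: divide_right_mono)
  have nn: "0 \<le> d / e" using assms by simp
  have t1: "0 \<le> Finf - FF ((1 - a) / e)" "Finf - FF ((1 - a) / e) \<le> 4 * exp (- ((1 - a) / e))"
    using FF_tail[of "(1 - a) / e"] z1 nn by auto
  have t0: "0 \<le> Finf - FF (a / e)" "Finf - FF (a / e) \<le> 4 * exp (- (a / e))"
    using FF_tail[of "a / e"] z0 nn by auto
  have m: "FF ((0 - a) / e) = - FF (a / e)" using FF_minus[of "a / e"] by simp
  have e1: "exp (- ((1 - a) / e)) \<le> exp (- d / e)" using z1 by simp
  have e0: "exp (- (a / e)) \<le> exp (- d / e)" using z0 by simp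
  have "\<bar>(FF ((1 - a) / e) - FF ((0 - a) / e)) - chiX\<bar> \<le> 8 * exp (- d / e)"
    unfolding chiX_val m using t1 t0 e1 e0 by linarith
  then have "e * \<bar>(FF ((1 - a) / e) - FF ((0 - a) / e)) - chiX\<bar> \<le> 1 * (8 * exp (- d / e))"
    using assms by (intro mult_mono) auto
  then show ?thesis unfolding I by (simp add: abs_mult right_diff_distrib[symmetric] assms(1) less_imp_le)
qed

lemma int01_bound:
  fixes f :: "real \<Rightarrow> real"
  assumes "f integrable_on {0..1}" "\<And>x. x \<in> {0..1} \<Longrightarrow> \<bar>f x\<bar> \<le> B"
  shows "\<bar>integral {0..1} f\<bar> \<le> (B::real)"
proof -
  have ci: "(\<lambda>x. c) integrable_on {0..1::real}" for c :: real by (rule integrable_continuous_real) simp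
  have up: "integral {0..1} f \<le> integral {0..1} (\<lambda>x::real. B)"
    by (rule Henstock_Kurzweil_Integration.integral_le[OF assms(1) ci]) (use assms(2) in \<open>auto simp: abs_le_iff\<close>)
  have lo: "- B \<le> f x" if "x \<in> {0..1}" for x using abs_le_D2[OF assms(2)[OF that]] by linarith
  have dn: "integral {0..1} (\<lambda>x::real. - B) \<le> integral {0..1} f"
    by (rule Henstock_Kurzweil_Integration.integral_le[OF ci assms(1)]) (use lo in auto)
  show ?thesis using up dn by (simp add: abs_le_iff)
qed

lemma cross_pt: assumes "0 < e" "g \<le> \<bar>a - b\<bar>"
  shows "Ud ((x - a) / e) * Ud ((x - b) / e) \<le> 4 * exp (- g / (2 * e))"
proof -
  have "g / 2 \<le> \<bar>x - a\<bar> \<or> g / 2 \<le> \<bar>x - b\<bar>" using assms by linarith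
  then show ?thesis
  proof
    assume h: "g / 2 \<le> \<bar>x - a\<bar>"
    have "Ud ((x - a) / e) \<le> 4 * exp (- \<bar>(x - a) / e\<bar>)" by (rule Ud_exp)
    also have "\<dots> \<le> 4 * exp (- g / (2 * e))"
      using h assms by (simp add: abs_div divide_right_mono field_simps)
    finally have "Ud ((x - a) / e) \<le> 4 * exp (- g / (2 * e))" .
    then show ?thesis using Ud_le1[of "(x - b) / e"] Ud_nonneg[of "(x - b) / e"] Ud_nonneg[of "(x - a) / e"]
      by (meson mult_left_le order_trans)
  next
    assume h: "g / 2 \<le> \<bar>x - b\<bar>"
    have "Ud ((x - b) / e) \<le> 4 * exp (- \<bar>(x - b) / e\<bar>)" by (rule Ud_exp)
    also have "\<dots> \<le> 4 * exp (- g / (2 * e))"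
      using h assms by (simp add: abs_div divide_right_mono field_simps)
    finally have "Ud ((x - b) / e) \<le> 4 * exp (- g / (2 * e))" .
    then show ?thesis using Ud_le1[of "(x - a) / e"] Ud_nonneg[of "(x - b) / e"] Ud_nonneg[of "(x - a) / e"]
      by (meson mult_left_le_one_le order_trans)
  qed
qed

lemma integrable_UdUd: "(\<lambda>x. Ud ((x - a) / e) * Ud ((x - b) / e)) integrable_on {0..1}"
  by (rule integrable_continuous_real) (intro continuous_intros contUd)

lemma cross_est: assumes "0 < e" "g \<le> \<bar>a - b\<bar>"
  shows "\<bar>integral {0..1} (\<lambda>x. Ud ((x - a) / e) * Ud ((x - b) / e))\<bar> \<le> 4 * exp (- g / (2 * e))"
  by (rule int01_bound[OF integrable_UdUd]) (use cross_pt[OF assms] Ud_nonneg in \<open>auto simp: abs_mult\<close>)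

lemma chain_mono:
  fixes H :: "nat \<Rightarrow> real" and N a b :: nat
  assumes "\<forall>j\<in>{1..N}. H j < H (j + 1)"
  shows "1 \<le> a \<Longrightarrow> a \<le> b \<Longrightarrow> b \<le> N + 1 \<Longrightarrow> H a \<le> (H b :: real)"
proof (induction b)
  case 0 then show ?case by simp
next
  case (Suc b)
  show ?case
  proof (cases "a = Suc b")
    case True then show ?thesis by simp
  next
    case False
    then have "a \<le> b" using Suc by simp
    then have "H a \<le> H b" using Suc by simp
    moreover have "b \<in> {1..N}" using Suc \<open>a \<le> b\<close> by auto
    ultimately show ?thesis using assms by force
  qed
qed

lemma Omega_facts:
  assumes H: "H \<in> Omega N ka0 eps"
  shows "\<And>j. 1 \<le> j \<Longrightarrow> j \<le> N + 1 \<Longrightarrow> eps / rho ka0 eps / 2 < H j \<and> eps / rho ka0 eps / 2 < 1 - H j"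
    and "\<And>j l. 1 \<le> j \<Longrightarrow> j < l \<Longrightarrow> l \<le> N + 1 \<Longrightarrow> eps / rho ka0 eps < H l - H j"
proof -
  let ?g = "eps / rho ka0 eps"
  have h0: "0 < H 1" and mono: "\<forall>j\<in>{1..N}. H j < H (j + 1)" and top: "H (N + 1) < 1"
    and gap: "\<forall>j\<in>{0..N+1}. hext N H (j + 1) - hext N H j > ?g"
    using H unfolding Omega_def by auto
  have x1: "hext N H (0 + 1) = H 1" "hext N H 0 = - H 1" by (auto simp: hext_def)
  have g0: "?g < 2 * H 1" using gap[rule_format, of 0] unfolding x1 by simp
  have x2: "hext N H (N + 1 + 1) = 2 - H (N + 1)" "hext N H (N + 1) = H (N + 1)" by (auto simp: hext_def)
  have gN: "?g < 2 - 2 * H (N + 1)" using gap[rule_format, of "N + 1"] unfolding x2 by simp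
  have gj: "?g < H (j + 1) - H j" if "1 \<le> j" "j \<le> N" for j
  proof -
    have x3: "hext N H (j + 1) = H (j + 1)" "hext N H j = H j" using that by (auto simp: hext_def)
    show ?thesis using gap[rule_format, of j] that unfolding x3 by simp
  qed
  show "eps / rho ka0 eps / 2 < H j \<and> eps / rho ka0 eps / 2 < 1 - H j" if "1 \<le> j" "j \<le> N + 1" for j
  proof -
    define g where "g = eps / rho ka0 eps"
    have "H 1 \<le> H j" using chain_mono[OF mono, of 1 j] that by simp
    moreover have "H j \<le> H (N + 1)" using chain_mono[OF mono, of j "N + 1"] that by simp
    moreover have "g < 2 * H 1" "g < 2 - 2 * H (N + 1)" using g0 gN by (simp_all add: g_def)
    ultimately have "g / 2 < H j \<and> g / 2 < 1 - H j" by linarith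
    then show ?thesis by (simp add: g_def)
  qed
  show "?g < H l - H j" if "1 \<le> j" "j < l" "l \<le> N + 1" for j l
  proof -
    define g where "g = eps / rho ka0 eps"
    have "H (j + 1) \<le> H l" using chain_mono[OF mono, of "j + 1" l] that by simp
    moreover have "g < H (j + 1) - H j" using gj[of j] that by (simp add: g_def)
    ultimately have "g < H l - H j" by linarith
    then show ?thesis by (simp add: g_def)
  qed
qed

lemma Ushift_deriv:
  assumes "(g has_real_derivative g') (at t)"
  shows "((\<lambda>t. Ushift e (g t) s x) has_real_derivative (- s * g' / e * Ud ((x - g t) / e))) (at t)"
proof (cases "e = 0")
  case True then show ?thesis by (simp add: Ushift_def DERIV_const)
next
  case False
  have "((\<lambda>t. U ((x - g t) / e)) has_real_derivative Ud ((x - g t) / e) * ((0 - g') / e)) (at t)"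
    by (rule DERIV_chain2[OF U_deriv]) (use False in \<open>auto intro!: derivative_eq_intros assms\<close>)
  then have "((\<lambda>t. s * U ((x - g t) / e)) has_real_derivative s * (Ud ((x - g t) / e) * ((0 - g') / e))) (at t)"
    by (rule DERIV_cmult)
  then show ?thesis by (simp add: Ushift_def[abs_def] field_simps)
qed

lemma uk_formula:
  fixes N k :: nat
  assumes k: "1 \<le> k" "k \<le> N"
    and hd: "((\<lambda>t. hN1 e (xi(k := t))) has_real_derivative d) (at (xi k))"
    and bd: "((\<lambda>t. beta e (hxi N hN1 e (xi(k := t))) x) has_real_derivative b) (at (xi k))"
  shows "((\<lambda>t. uxi N beta hN1 e (xi(k := t)) x) has_real_derivative
      ((-1)^k / e * Ud ((x - xi k) / e) - (-1)^N * d / e * Ud ((x - hN1 e xi) / e) + b)) (at (xi k))"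
proof -
  define H where "H t = hxi N hN1 e (xi(k := t))" for t
  define R where "R = {1..N+1} - {N+1} - {k}"
  define C where "C = (\<Sum>j\<in>R. Ushift e (xi j) ((-1) ^ (j + 1)) x)"
  have HN: "H t (N + 1) = hN1 e (xi(k := t))" for t by (simp add: H_def hxi_def)
  have Hk: "H t k = t" for t using k by (simp add: H_def hxi_def)
  have HR: "j \<in> R \<Longrightarrow> H t j = xi j" for t j by (auto simp: H_def hxi_def R_def)
  have split: "(\<Sum>j = 1..N+1. f j) = f (N + 1) + (f k + (\<Sum>j\<in>R. f j))" for f :: "nat \<Rightarrow> real"
  proof -
    have "(\<Sum>j = 1..N+1. f j) = f (N + 1) + (\<Sum>j\<in>{1..N+1} - {N+1}. f j)" by (rule sum.remove) auto
    moreover have "(\<Sum>j\<in>{1..N+1} - {N+1}. f j) = f k + (\<Sum>j\<in>R. f j)"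
      unfolding R_def by (rule sum.remove) (use k in auto)
    ultimately show ?thesis by simp
  qed
  have eq: "uxi N beta hN1 e (xi(k := t)) x =
     Ushift e (hN1 e (xi(k := t))) ((-1) ^ (N + 1 + 1)) x + (Ushift e t ((-1) ^ (k + 1)) x + C) + beta e (H t) x" for t
  proof -
    have "uxi N beta hN1 e (xi(k := t)) x = (\<Sum>j = 1..N+1. Ushift e (H t j) ((-1) ^ (j + 1)) x) + beta e (H t) x"
      by (simp add: uxi_def uh_def H_def)
    also have "(\<Sum>j = 1..N+1. Ushift e (H t j) ((-1) ^ (j + 1)) x) =
       Ushift e (H t (N+1)) ((-1) ^ (N + 1 + 1)) x + (Ushift e (H t k) ((-1) ^ (k + 1)) x + (\<Sum>j\<in>R. Ushift e (H t j) ((-1) ^ (j + 1)) x))"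
      by (rule split)
    also have "(\<Sum>j\<in>R. Ushift e (H t j) ((-1) ^ (j + 1)) x) = C"
      unfolding C_def by (rule sum.cong) (auto simp: HR)
    finally show ?thesis by (simp only: HN Hk)
  qed
  have D1: "((\<lambda>t. Ushift e (hN1 e (xi(k := t))) ((-1) ^ (N + 1 + 1)) x) has_real_derivative
      (- ((-1) ^ (N + 1 + 1)) * d / e * Ud ((x - hN1 e (xi(k := xi k))) / e))) (at (xi k))"
    by (rule Ushift_deriv[OF hd])
  have D2: "((\<lambda>t. Ushift e t ((-1) ^ (k + 1)) x) has_real_derivative
      (- ((-1) ^ (k + 1)) * 1 / e * Ud ((x - xi k) / e))) (at (xi k))"
    by (rule Ushift_deriv[OF DERIV_ident])
  have D3: "((\<lambda>t. beta e (H t) x) has_real_derivative b) (at (xi k))"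
    using bd by (simp add: H_def)
  have "((\<lambda>t. Ushift e (hN1 e (xi(k := t))) ((-1) ^ (N + 1 + 1)) x + (Ushift e t ((-1) ^ (k + 1)) x + C) + beta e (H t) x)
      has_real_derivative
      (- ((-1) ^ (N + 1 + 1)) * d / e * Ud ((x - hN1 e (xi(k := xi k))) / e)) +
      ((- ((-1) ^ (k + 1)) * 1 / e * Ud ((x - xi k) / e)) + 0) + b) (at (xi k))"
    by (intro DERIV_add D1 D2 D3 DERIV_const)
  then show ?thesis unfolding eq[abs_def] by (simp add: algebra_simps)
qed

definition Am :: "nat \<Rightarrow> nat \<Rightarrow> real" where
  "Am k j = (-1) ^ (k + j) * ((if k = j then 1 else 0) + 1)"
definition Bm :: "nat \<Rightarrow> nat \<Rightarrow> nat \<Rightarrow> real" where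
  "Bm N k j = (if k = j then 1 else 0) - (-1) ^ (k + j) / (N + 1)"

lemma sign_mult: "(-1::real) ^ (k + p) * (-1) ^ (p + l) = (-1) ^ (k + l)"
proof -
  have "(-1::real) ^ (k + p) * (-1) ^ (p + l) = (-1) ^ (k + l) * ((-1) ^ p * (-1) ^ p)"
    by (simp add: power_add algebra_simps)
  moreover have "(-1::real) ^ p * (-1) ^ p = 1"
    by (simp add: power_mult_distrib[symmetric])
  ultimately show ?thesis by simp
qed

lemma sign_same: "(-1::real) ^ (k + k) = 1"
  by (metis mult_2 power_minus1_even)

lemma Bm_abs: "\<bar>Bm N k p\<bar> \<le> 2"
proof -
  have a1: "\<bar>(-1::real) ^ (k + p)\<bar> = 1" by (simp add: power_abs)
  have "\<bar>(-1::real) ^ (k + p) / (real N + 1)\<bar> = 1 / (real N + 1)" by (simp add: abs_div a1)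
  also have "\<dots> \<le> 1" by simp
  finally have q: "\<bar>(-1::real) ^ (k + p) / (real N + 1)\<bar> \<le> 1" .
  have d: "\<bar>(if k = p then 1 else 0)::real\<bar> \<le> 1" by simp
  have "\<bar>(if k = p then 1 else 0) - (-1) ^ (k + p) / (real N + 1)\<bar> \<le> 2"
    using q d abs_triangle_ineq4[of "(if k = p then 1 else 0)::real" "(-1)^(k+p)/(real N+1)"] by linarith
  then show ?thesis unfolding Bm_def by simp
qed

lemma BA: assumes "k < N" "l < N"
  shows "(\<Sum>p<N. Bm N k p * Am p l) = (if k = l then 1 else 0)"
proof -
  have pt: "Bm N k p * Am p l = (if p = k then Am p l else 0) - (-1) ^ (k + l) / (N + 1) * ((if p = l then 1 else 0) + 1)" for p
  proof -
    have "Bm N k p * Am p l = (if k = p then 1 else 0) * Am p l - (-1) ^ (k + p) * (-1) ^ (p + l) / (N + 1) * ((if p = l then 1 else 0) + 1)"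
      by (simp add: Bm_def Am_def algebra_simps)
    then show ?thesis by (simp add: sign_mult)
  qed
  have s1: "(\<Sum>p<N. (if p = k then Am p l else 0)) = Am k l" using assms by simp
  have s2: "(\<Sum>p<N. ((if p = l then 1 else 0) + 1 :: real)) = 1 + N" using assms by (simp add: sum.distrib)
  have "(\<Sum>p<N. Bm N k p * Am p l) = Am k l - (-1) ^ (k + l) / (N + 1) * (1 + N)"
    unfolding pt sum_subtractf s1 sum_distrib_left[symmetric] s2 by simp
  also have "\<dots> = (if k = l then 1 else 0)"
    by (simp add: Am_def sign_same field_simps)
  finally show ?thesis .
qed

lemma core:
  fixes S :: "nat \<Rightarrow> nat \<Rightarrow> real"
  assumes k: "k < N" and Sw: "\<And>p. p < N \<Longrightarrow> (\<Sum>l<N. S p l * w l) = c p"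
  shows "lam * w k + (\<Sum>l<N. (\<Sum>p<N. Bm N k p * (S p l - lam * Am p l)) * w l) = (\<Sum>p<N. Bm N k p * c p)"
proof -
  have "(\<Sum>p<N. Bm N k p * c p) = (\<Sum>p<N. Bm N k p * (\<Sum>l<N. S p l * w l))" using Sw by simp
  also have "\<dots> = (\<Sum>p<N. \<Sum>l<N. Bm N k p * S p l * w l)" by (simp add: sum_distrib_left mult.assoc)
  also have "\<dots> = (\<Sum>l<N. \<Sum>p<N. Bm N k p * S p l * w l)" by (rule sum.swap)
  also have "\<dots> = (\<Sum>l<N. (\<Sum>p<N. Bm N k p * S p l) * w l)" by (simp add: sum_distrib_right)
  also have "\<dots> = (\<Sum>l<N. (lam * (if k = l then 1 else 0) + (\<Sum>p<N. Bm N k p * (S p l - lam * Am p l))) * w l)"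
  proof (rule sum.cong)
    fix l assume "l \<in> {..<N}"
    then have l: "l < N" by simp
    have "(\<Sum>p<N. Bm N k p * (S p l - lam * Am p l)) = (\<Sum>p<N. Bm N k p * S p l) - lam * (\<Sum>p<N. Bm N k p * Am p l)"
      by (simp add: right_diff_distrib sum_subtractf sum_distrib_left mult.left_commute)
    then show "(\<Sum>p<N. Bm N k p * S p l) * w l = (lam * (if k = l then 1 else 0) + (\<Sum>p<N. Bm N k p * (S p l - lam * Am p l))) * w l"
      using BA[OF k l] by simp
  qed simp
  also have "\<dots> = (\<Sum>l<N. (if k = l then lam * w l else 0) + (\<Sum>p<N. Bm N k p * (S p l - lam * Am p l)) * w l)"
    by (rule sum.cong) (auto simp: distrib_right)
  also have "\<dots> = (\<Sum>l<N. (if k = l then lam * w l else 0)) + (\<Sum>l<N. (\<Sum>p<N. Bm N k p * (S p l - lam * Am p l)) * w l)"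
    by (rule sum.distrib)
  also have "(\<Sum>l<N. (if k = l then lam * w l else 0)) = lam * w k" using k by simp
  finally show ?thesis by simp
qed

lemma core_bound:
  fixes S :: "nat \<Rightarrow> nat \<Rightarrow> real"
  assumes k: "k < N" and Sw: "\<And>p. p < N \<Longrightarrow> (\<Sum>l<N. S p l * w l) = c p"
    and E: "\<And>p l. p < N \<Longrightarrow> l < N \<Longrightarrow> \<bar>S p l - lam * Am p l\<bar> \<le> D"
    and M: "\<And>l. l < N \<Longrightarrow> \<bar>w l\<bar> \<le> M"
  shows "\<bar>lam * w k - (\<Sum>p<N. Bm N k p * c p)\<bar> \<le> 2 * real N * real N * D * M"
proof -
  let ?R = "\<Sum>l<N. (\<Sum>p<N. Bm N k p * (S p l - lam * Am p l)) * w l"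
  have "lam * w k + ?R = (\<Sum>p<N. Bm N k p * c p)" by (rule core) (use k Sw in auto)
  then have eq: "lam * w k - (\<Sum>p<N. Bm N k p * c p) = - ?R" by simp
  have e00: "\<bar>S 0 0 - lam * Am 0 0\<bar> \<le> D" by (rule E) (use k in auto)
  have D0: "0 \<le> D" using e00 abs_ge_zero[of "S 0 0 - lam * Am 0 0"] by linarith
  have m00: "\<bar>w 0\<bar> \<le> M" by (rule M) (use k in auto)
  have M0: "0 \<le> M" using m00 abs_ge_zero[of "w 0"] by linarith
  have inner: "\<bar>\<Sum>p<N. Bm N k p * (S p l - lam * Am p l)\<bar> \<le> real N * (2 * D)" if l: "l < N" for l
  proof -
    have "\<bar>\<Sum>p<N. Bm N k p * (S p l - lam * Am p l)\<bar> \<le> (\<Sum>p<N. \<bar>Bm N k p * (S p l - lam * Am p l)\<bar>)"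
      by (rule sum_abs)
    also have "\<dots> \<le> (\<Sum>p<N. 2 * D)"
    proof (rule sum_mono)
      fix p assume "p \<in> {..<N}"
      then show "\<bar>Bm N k p * (S p l - lam * Am p l)\<bar> \<le> 2 * D"
        unfolding abs_mult using Bm_abs[of N k p] E[of p l] l by (intro mult_mono) auto
    qed
    finally show ?thesis by simp
  qed
  have "\<bar>?R\<bar> \<le> (\<Sum>l<N. \<bar>(\<Sum>p<N. Bm N k p * (S p l - lam * Am p l)) * w l\<bar>)" by (rule sum_abs)
  also have "\<dots> \<le> (\<Sum>l<N. real N * (2 * D) * M)"
  proof (rule sum_mono)
    fix l assume "l \<in> {..<N}"
    then show "\<bar>(\<Sum>p<N. Bm N k p * (S p l - lam * Am p l)) * w l\<bar> \<le> real N * (2 * D) * M"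
      unfolding abs_mult using inner[of l] M[of l] D0 by (intro mult_mono) auto
  qed
  finally show ?thesis unfolding eq by (simp add: algebra_simps)
qed

lemma max_attained:
  fixes f :: "nat \<Rightarrow> real"
  assumes "0 < N"
  shows "\<exists>i<N. \<forall>l<N. \<bar>f l\<bar> \<le> \<bar>f i\<bar>"
proof -
  let ?A = "(\<lambda>l. \<bar>f l\<bar>) ` {..<N}"
  have "Max ?A \<in> ?A" using assms by (intro Max_in) auto
  then obtain i where i: "i < N" "Max ?A = \<bar>f i\<bar>" by auto
  have "\<forall>l<N. \<bar>f l\<bar> \<le> Max ?A" by (auto intro: Max_ge)
  then show ?thesis using i by auto
qed

lemma Omega_eventually:
  assumes lim: "\<And>j. ((\<lambda>n. Hs n j) \<longlongrightarrow> H0 j) F" and H0: "H0 \<in> Omega N ka0 e"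
  shows "eventually (\<lambda>n. Hs n \<in> Omega N ka0 e) F"
proof -
  let ?g = "e / rho ka0 e"
  have h0: "0 < H0 1" and mono: "\<forall>j\<in>{1..N}. H0 j < H0 (j + 1)" and top: "H0 (N + 1) < 1"
    and gap: "\<forall>j\<in>{0..N+1}. hext N H0 (j + 1) - hext N H0 j > ?g"
    using H0 unfolding Omega_def by auto
  have hx: "((\<lambda>n. hext N (Hs n) j) \<longlongrightarrow> hext N H0 j) F" for j
    unfolding hext_def by (auto intro!: tendsto_intros lim)
  have e1: "eventually (\<lambda>n. 0 < Hs n 1) F" by (rule order_tendstoD(1)[OF lim h0])
  have e2: "eventually (\<lambda>n. \<forall>j\<in>{1..N}. Hs n j < Hs n (j + 1)) F"
  proof (rule eventually_ball_finite)
    show "\<forall>j\<in>{1..N}. eventually (\<lambda>n. Hs n j < Hs n (j + 1)) F"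
    proof
      fix j assume "j \<in> {1..N}"
      then have "0 < H0 (j + 1) - H0 j" using mono by auto
      from order_tendstoD(1)[OF tendsto_diff[OF lim[of "j+1"] lim[of j]] this]
      show "eventually (\<lambda>n. Hs n j < Hs n (j + 1)) F" by (rule eventually_mono) simp
    qed
  qed simp
  have e3: "eventually (\<lambda>n. Hs n (N + 1) < 1) F" by (rule order_tendstoD(2)[OF lim top])
  have e4: "eventually (\<lambda>n. \<forall>j\<in>{0..N+1}. hext N (Hs n) (j + 1) - hext N (Hs n) j > ?g) F"
  proof (rule eventually_ball_finite)
    show "\<forall>j\<in>{0..N+1}. eventually (\<lambda>n. hext N (Hs n) (j + 1) - hext N (Hs n) j > ?g) F"
    proof
      fix j assume "j \<in> {0..N+1}"
      then have "?g < hext N H0 (j + 1) - hext N H0 j" using gap by auto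
      from order_tendstoD(1)[OF tendsto_diff[OF hx[of "j+1"] hx[of j]] this]
      show "eventually (\<lambda>n. hext N (Hs n) (j + 1) - hext N (Hs n) j > ?g) F" .
    qed
  qed simp
  show ?thesis using e1 e2 e3 e4 unfolding Omega_def
    by eventually_elim auto
qed

lemma uh_cont:
  assumes "continuous_on {0..1} (beta e H)"
  shows "continuous_on {0..1} (uh N beta e H)"
proof -
  have cU: "continuous_on UNIV U" using U_deriv DERIV_isCont continuous_at_imp_continuous_on by blast
  have "continuous_on {0..1} (\<lambda>x. Ushift e (H j) ((-1) ^ (j + 1)) x)" for j
  proof (cases "e = 0")
    case True then show ?thesis by (simp add: Ushift_def)
  next
    case False
    have "continuous_on {0..1} (\<lambda>x. U ((x - H j) / e))"
      by (rule continuous_on_compose2[OF cU]) (use False in \<open>auto intro!: continuous_intros\<close>)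
    then show ?thesis unfolding Ushift_def by (intro continuous_intros)
  qed
  then show ?thesis unfolding uh_def[abs_def] using assms
    by (intro continuous_intros continuous_on_sum) auto
qed

locale LS =
  fixes N :: nat and ka0 :: real
    and beta :: "real \<Rightarrow> (nat \<Rightarrow> real) \<Rightarrow> real \<Rightarrow> real"
    and hN1 :: "real \<Rightarrow> (nat \<Rightarrow> real) \<Rightarrow> real"
    and eps1 K0 c0 :: real
  assumes N: "N \<ge> 1"
    and ka0: "0 < ka0"
    and pos_const: "0 < eps1" "0 < K0" "0 < c0"
    and beta_cont: "\<And>eps h. 0 < eps \<Longrightarrow> eps < eps1 \<Longrightarrow> h \<in> Omega N ka0 eps \<Longrightarrow>
        continuous_on {0..1} (beta eps h)"
    and beta_deriv: "\<And>eps xi k x. 0 < eps \<Longrightarrow> eps < eps1 \<Longrightarrow> hxi N hN1 eps xi \<in> Omega N ka0 eps \<Longrightarrow>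
        k \<in> {1..N} \<Longrightarrow> x \<in> {0..1} \<Longrightarrow>
        \<exists>D. ((\<lambda>t. beta eps (hxi N hN1 eps (xi(k := t))) x) has_real_derivative D) (at (xi k))
            \<and> \<bar>D\<bar> \<le> expbound ka0 K0 c0 eps"
    and hN1_deriv: "\<And>eps xi k. 0 < eps \<Longrightarrow> eps < eps1 \<Longrightarrow> hxi N hN1 eps xi \<in> Omega N ka0 eps \<Longrightarrow>
        k \<in> {1..N} \<Longrightarrow>
        \<exists>D. ((\<lambda>t. hN1 eps (xi(k := t))) has_real_derivative D) (at (xi k))
            \<and> \<bar>D - (-1) ^ (N - k)\<bar> \<le> expbound ka0 K0 c0 eps"
begin

abbreviation "eta e \<equiv> expbound ka0 K0 c0 e"
abbreviation "uk e xi k \<equiv> uxi_k N beta hN1 e xi k"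
definition mk :: "real \<Rightarrow> (nat \<Rightarrow> real) \<Rightarrow> nat \<Rightarrow> real \<Rightarrow> real" where
  "mk e xi k x = (-1) ^ k / e * (Ud ((x - xi k) / e) - Ud ((x - hN1 e xi) / e))"

lemma eta_nonneg: "0 \<le> eta e"
  using pos_const by (simp add: expbound_def)

lemma uk_repr:
  assumes e: "0 < e" "e < eps1" and H: "hxi N hN1 e xi \<in> Omega N ka0 e" and k: "1 \<le> k" "k \<le> N"
  obtains d where "\<bar>d - (-1) ^ (N - k)\<bar> \<le> eta e"
    and "\<And>x. x \<in> {0..1} \<Longrightarrow> ((\<lambda>t. uxi N beta hN1 e (xi(k := t)) x) has_real_derivative uk e xi k x) (at (xi k))"
    and "\<And>x. x \<in> {0..1} \<Longrightarrow> \<bar>uk e xi k x - ((-1) ^ k / e * Ud ((x - xi k) / e) - (-1) ^ N * d / e * Ud ((x - hN1 e xi) / e))\<bar> \<le> eta e"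
proof -
  obtain d where hd: "((\<lambda>t. hN1 e (xi(k := t))) has_real_derivative d) (at (xi k))" and db: "\<bar>d - (-1) ^ (N - k)\<bar> \<le> eta e"
    using hN1_deriv[OF e H] k by auto
  have X: "((\<lambda>t. uxi N beta hN1 e (xi(k := t)) x) has_real_derivative uk e xi k x) (at (xi k))
     \<and> \<bar>uk e xi k x - ((-1) ^ k / e * Ud ((x - xi k) / e) - (-1) ^ N * d / e * Ud ((x - hN1 e xi) / e))\<bar> \<le> eta e"
    if x: "x \<in> {0..1}" for x
  proof -
    obtain b where bd: "((\<lambda>t. beta e (hxi N hN1 e (xi(k := t))) x) has_real_derivative b) (at (xi k))" and bb: "\<bar>b\<bar> \<le> eta e"
      using beta_deriv[OF e H _ x] k by auto
    have D: "((\<lambda>t. uxi N beta hN1 e (xi(k := t)) x) has_real_derivative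
      ((-1)^k / e * Ud ((x - xi k) / e) - (-1)^N * d / e * Ud ((x - hN1 e xi) / e) + b)) (at (xi k))"
      by (rule uk_formula) (use k hd bd in auto)
    then have "uk e xi k x = (-1)^k / e * Ud ((x - xi k) / e) - (-1)^N * d / e * Ud ((x - hN1 e xi) / e) + b"
      unfolding uxi_k_def by (rule DERIV_imp_deriv)
    then show ?thesis using D bb by simp
  qed
  show ?thesis using that db X by blast
qed

lemma sign_split: assumes "k \<le> N" shows "(-1::real) ^ N * (-1) ^ (N - k) = (-1) ^ k"
proof -
  have "(-1::real) ^ N = (-1) ^ (N - k) * (-1) ^ k" using assms by (simp add: power_add[symmetric])
  then have "(-1::real) ^ N * (-1) ^ (N - k) = (-1) ^ (N - k + (N - k)) * (-1) ^ k" by (simp add: power_add)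
  then show ?thesis by (simp add: sign_same)
qed

lemma uk_approx:
  assumes e: "0 < e" "e < eps1" "e \<le> 1" and H: "hxi N hN1 e xi \<in> Omega N ka0 e" and k: "1 \<le> k" "k \<le> N"
    and x: "x \<in> {0..1}"
  shows "\<bar>uk e xi k x - mk e xi k x\<bar> \<le> 2 * eta e / e"
proof -
  obtain d where db: "\<bar>d - (-1) ^ (N - k)\<bar> \<le> eta e"
    and rep: "\<bar>uk e xi k x - ((-1) ^ k / e * Ud ((x - xi k) / e) - (-1) ^ N * d / e * Ud ((x - hN1 e xi) / e))\<bar> \<le> eta e"
    using uk_repr[OF e(1,2) H k] x by metis
  let ?V = "(-1) ^ k / e * Ud ((x - xi k) / e) - (-1) ^ N * d / e * Ud ((x - hN1 e xi) / e)"
  let ?W = "Ud ((x - hN1 e xi) / e)"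
  have "?V - mk e xi k x = ((-1) ^ k - (-1) ^ N * d) / e * ?W"
    using e(1) by (simp add: mk_def field_simps)
  also have "(-1) ^ k - (-1) ^ N * d = (-1) ^ N * ((-1) ^ (N - k) - d)"
    using sign_split[OF k(2)] by (simp add: algebra_simps)
  finally have VW: "\<bar>?V - mk e xi k x\<bar> = \<bar>(-1) ^ (N - k) - d\<bar> / e * ?W"
    using e Ud_nonneg[of "(x - hN1 e xi) / e"] by (simp add: abs_mult abs_div)
  have "\<bar>(-1) ^ (N - k) - d\<bar> / e * ?W \<le> eta e / e * 1"
    using db e Ud_nonneg[of "(x - hN1 e xi) / e"] Ud_le1[of "(x - hN1 e xi) / e"]
    by (intro mult_mono divide_right_mono) (auto simp: abs_minus_commute)
  then have "\<bar>?V - mk e xi k x\<bar> \<le> eta e / e" using VW by simp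
  moreover have "eta e \<le> eta e / e" using e eta_nonneg[of e] by (simp add: le_divide_eq mult_left_le)
  ultimately show ?thesis using rep by (simp add: field_simps; linarith)
qed

lemma mk_bound: assumes "0 < e" shows "\<bar>mk e xi k x\<bar> \<le> 1 / e"
proof -
  have "\<bar>Ud ((x - xi k) / e) - Ud ((x - hN1 e xi) / e)\<bar> \<le> 1"
    using Ud_nonneg[of "(x - xi k) / e"] Ud_le1[of "(x - xi k) / e"]
      Ud_nonneg[of "(x - hN1 e xi) / e"] Ud_le1[of "(x - hN1 e xi) / e"] by linarith
  then show ?thesis using assms unfolding mk_def by (simp add: abs_mult abs_div divide_right_mono)
qed

lemma mk_cont: "continuous_on {0..1} (mk e xi k)"
  unfolding mk_def[abs_def] by (intro continuous_intros contUd)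

lemma uk_meas:
  assumes e: "0 < e" "e < eps1" and H: "hxi N hN1 e xi \<in> Omega N ka0 e" and k: "1 \<le> k" "k \<le> N"
  shows "uk e xi k \<in> borel_measurable (lebesgue_on {0..1})"
proof -
  obtain d where hd: "((\<lambda>t. hN1 e (xi(k := t))) has_real_derivative d) (at (xi k))"
    using hN1_deriv[OF e H] k by auto
  have der: "\<And>x. x \<in> {0..1} \<Longrightarrow> ((\<lambda>t. uxi N beta hN1 e (xi(k := t)) x) has_real_derivative uk e xi k x) (at (xi k))"
    using uk_repr[OF e H k] by metis
  define q where "q n = xi k + inverse (real (Suc n))" for n
  have q_lim: "q \<longlonglongrightarrow> xi k"
    unfolding q_def using tendsto_add[OF tendsto_const LIMSEQ_inverse_real_of_nat] by simp
  have q_ne: "q n \<noteq> xi k" for n by (simp add: q_def)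
  have q_at: "filterlim q (at (xi k)) sequentially"
    unfolding filterlim_at using q_lim q_ne by auto
  define Hs where "Hs n = hxi N hN1 e (xi(k := q n))" for n
  have Hs_lim: "((\<lambda>n. Hs n j) \<longlongrightarrow> hxi N hN1 e xi j) sequentially" for j
  proof (cases "j = N + 1")
    case True
    have "isCont (\<lambda>t. hN1 e (xi(k := t))) (xi k)" using hd by (rule DERIV_isCont)
    from isCont_tendsto_compose[OF this q_lim]
    show ?thesis using True by (simp add: Hs_def hxi_def)
  next
    case False
    then show ?thesis using q_lim by (cases "j = k") (auto simp: Hs_def hxi_def)
  qed
  have ev: "eventually (\<lambda>n. Hs n \<in> Omega N ka0 e) sequentially"
    by (rule Omega_eventually[OF Hs_lim H])
  define f where "f n x = (if Hs n \<in> Omega N ka0 e then (uxi N beta hN1 e (xi(k := q n)) x - uxi N beta hN1 e xi x) / (q n - xi k) else 0)" for n x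
  show ?thesis
  proof (rule borel_measurable_LIMSEQ_real[where u = f])
    fix x assume "x \<in> space (lebesgue_on {0..1::real})"
    then have x: "x \<in> {0..1}" by simp
    have "((\<lambda>t. (uxi N beta hN1 e (xi(k := t)) x - uxi N beta hN1 e (xi(k := xi k)) x) / (t - xi k)) \<longlongrightarrow> uk e xi k x) (at (xi k))"
      using der[OF x] by (simp add: has_field_derivative_iff)
    from filterlim_compose[OF this q_at]
    have "(\<lambda>n. (uxi N beta hN1 e (xi(k := q n)) x - uxi N beta hN1 e xi x) / (q n - xi k)) \<longlonglongrightarrow> uk e xi k x"
      by simp
    then show "(\<lambda>n. f n x) \<longlonglongrightarrow> uk e xi k x"
      by (rule Lim_transform_eventually) (use ev in \<open>auto elim!: eventually_mono simp: f_def\<close>)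
  next
    fix n
    show "f n \<in> borel_measurable (lebesgue_on {0..1})"
    proof (cases "Hs n \<in> Omega N ka0 e")
      case True
      have c1: "continuous_on {0..1} (uxi N beta hN1 e (xi(k := q n)))"
        unfolding uxi_def using beta_cont[OF e True] uh_cont unfolding Hs_def by blast
      have c2: "continuous_on {0..1} (uxi N beta hN1 e xi)"
        unfolding uxi_def using beta_cont[OF e H] uh_cont by blast
      have "continuous_on {0..1} (f n)"
        unfolding f_def[abs_def] using True by (simp add: continuous_intros c1 c2 q_ne)
      then show ?thesis by (rule continuous_imp_measurable_on_sets_lebesgue) simp
    next
      case False
      then show ?thesis by (simp add: f_def[abs_def])
    qed
  qed
qed

end

lemma mat_mult_entry:
  fixes A B :: "real mat"
  assumes "A \<in> carrier_mat n n" "B \<in> carrier_mat n n" "i < n" "j < n"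
  shows "(A * B) $$ (i, j) = (\<Sum>l<n. A $$ (i, l) * B $$ (l, j))"
  using assms by (simp add: index_mult_mat scalar_prod_def atLeast0LessThan)

lemma mat_vec_entry:
  fixes A :: "real mat"
  assumes "A \<in> carrier_mat n n" "v \<in> carrier_vec n" "i < n"
  shows "(A *\<^sub>v v) $ i = (\<Sum>l<n. A $$ (i, l) * v $ l)"
  using assms by (simp add: scalar_prod_def atLeast0LessThan)

lemma matrix_final:
  fixes S :: "real mat"
  assumes N: "0 < N" and S: "S \<in> carrier_mat N N" and lam: "0 < lam"
    and E: "\<And>k j. k < N \<Longrightarrow> j < N \<Longrightarrow> \<bar>S $$ (k, j) - lam * Am k j\<bar> \<le> D"
    and small: "4 * real N * real N * D \<le> lam"
  shows "invertible_mat S"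
    and "\<And>T k j. T \<in> carrier_mat N N \<Longrightarrow> inverts_mat S T \<Longrightarrow> k < N \<Longrightarrow> j < N \<Longrightarrow>
           \<bar>T $$ (k, j) - Bm N k j / lam\<bar> \<le> 8 * real N * real N * D / lam\<^sup>2"
proof -
  let ?S = "\<lambda>p l. S $$ (p, l)"
  have E': "\<And>p l. p < N \<Longrightarrow> l < N \<Longrightarrow> \<bar>?S p l - lam * Am p l\<bar> \<le> D" using E by simp
  have D0: "0 \<le> D" using E[of 0 0] N by (meson abs_ge_zero order_trans)
  have half: "2 * real N * real N * D * M \<le> lam * M / 2" if "0 \<le> M" for M :: real
  proof -
    have "2 * real N * real N * D * M = (4 * real N * real N * D) * M / 2" by simp
    also have "\<dots> \<le> lam * M / 2" using small that by (intro divide_right_mono mult_right_mono) auto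
    finally show ?thesis .
  qed
  show "invertible_mat S"
  proof -
    have "det S \<noteq> 0"
    proof
      assume "det S = 0"
      then obtain v where v: "v \<in> carrier_vec N" "v \<noteq> 0\<^sub>v N" "S *\<^sub>v v = 0\<^sub>v N"
        using det_0_iff_vec_prod_zero_field[OF S] by auto
      have Sv: "\<And>p. p < N \<Longrightarrow> (\<Sum>l<N. ?S p l * v $ l) = 0"
      proof -
        fix p assume p: "p < N"
        have "(S *\<^sub>v v) $ p = 0" using v(3) p by simp
        then show "(\<Sum>l<N. ?S p l * v $ l) = 0" using mat_vec_entry[OF S v(1) p] by simp
      qed
      obtain i where i: "i < N" "\<forall>l<N. \<bar>v $ l\<bar> \<le> \<bar>v $ i\<bar>"
        using max_attained[OF N, of "\<lambda>l. v $ l"] by auto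
      have "\<bar>lam * v $ i - (\<Sum>p<N. Bm N i p * 0)\<bar> \<le> 2 * real N * real N * D * \<bar>v $ i\<bar>"
        by (rule core_bound[where S = ?S and w = "\<lambda>l. v $ l" and c = "\<lambda>p. 0"]) (use i Sv E' in auto)
      then have "lam * \<bar>v $ i\<bar> \<le> 2 * real N * real N * D * \<bar>v $ i\<bar>" using lam by (simp add: abs_mult)
      then have "lam * \<bar>v $ i\<bar> \<le> lam * \<bar>v $ i\<bar> / 2" using half[of "\<bar>v $ i\<bar>"] by linarith
      then have "lam * \<bar>v $ i\<bar> \<le> 0" by linarith
      then have "\<bar>v $ i\<bar> = 0" using lam mult_pos_pos[of lam "\<bar>v $ i\<bar>"] by fastforce
      then have "\<forall>l<N. v $ l = 0" using i by auto
      then have "v = 0\<^sub>v N" using v(1) by (intro eq_vecI) auto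
      then show False using v(2) by simp
    qed
    from det_non_zero_imp_unit[OF S this, of "()"]
    obtain B where B: "B \<in> carrier_mat N N" "B * S = 1\<^sub>m N" "S * B = 1\<^sub>m N"
      unfolding Units_def ring_mat_def by auto
    show ?thesis unfolding invertible_mat_def inverts_mat_def square_mat.simps
      using S B by (intro conjI exI[of _ B]) auto
  qed
  fix T k j
  assume T: "T \<in> carrier_mat N N" and inv: "inverts_mat S T" and k: "k < N" and j: "j < N"
  have ST: "S * T = 1\<^sub>m N" using inv S unfolding inverts_mat_def by simp
  let ?w = "\<lambda>l. T $$ (l, j)"
  let ?c = "\<lambda>p. if p = j then 1 else 0 :: real"
  have Sw: "\<And>p. p < N \<Longrightarrow> (\<Sum>l<N. ?S p l * ?w l) = ?c p"
  proof -
    fix p assume p: "p < N"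
    have "(S * T) $$ (p, j) = ?c p" using ST p j by simp
    then show "(\<Sum>l<N. ?S p l * ?w l) = ?c p" using mat_mult_entry[OF S T p j] by simp
  qed
  have Bc: "(\<Sum>p<N. Bm N k' p * ?c p) = Bm N k' j" for k' using j by (simp add: if_distrib cong: if_cong)
  obtain i where i: "i < N" "\<forall>l<N. \<bar>?w l\<bar> \<le> \<bar>?w i\<bar>"
    using max_attained[OF N, of ?w] by auto
  have "\<bar>lam * ?w i - Bm N i j\<bar> \<le> 2 * real N * real N * D * \<bar>?w i\<bar>"
    using core_bound[where S = ?S and w = ?w and c = ?c, OF i(1) Sw E'] i(2) Bc by auto
  then have "lam * \<bar>?w i\<bar> \<le> 2 + lam * \<bar>?w i\<bar> / 2"
    using half[of "\<bar>?w i\<bar>"] Bm_abs[of N i j] lam by (simp add: abs_mult; linarith)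
  then have wi: "\<bar>?w i\<bar> \<le> 4 / lam" using lam by (simp add: field_simps)
  have M: "\<And>l. l < N \<Longrightarrow> \<bar>?w l\<bar> \<le> 4 / lam" using i(2) wi by (meson order_trans)
  have "\<bar>lam * ?w k - Bm N k j\<bar> \<le> 2 * real N * real N * D * (4 / lam)"
    using core_bound[where S = ?S and w = ?w and c = ?c and M = "4 / lam", OF k Sw E' M] Bc by auto
  moreover have "\<bar>?w k - Bm N k j / lam\<bar> = \<bar>lam * ?w k - Bm N k j\<bar> / lam"
  proof -
    have "?w k - Bm N k j / lam = (lam * ?w k - Bm N k j) / lam" using lam by (simp add: field_simps)
    then show ?thesis using lam by (simp add: abs_div)
  qed
  moreover have "\<bar>lam * ?w k - Bm N k j\<bar> / lam \<le> (2 * real N * real N * D * (4 / lam)) / lam"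
    using calculation(1) lam by (intro divide_right_mono) auto
  moreover have "(2 * real N * real N * D * (4 / lam)) / lam = 8 * real N * real N * D / lam\<^sup>2"
    using lam by (simp add: power2_eq_square)
  ultimately show "\<bar>T $$ (k, j) - Bm N k j / lam\<bar> \<le> 8 * real N * real N * D / lam\<^sup>2" by simp
qed

context LS
begin

lemma prod_est:
  assumes e: "0 < e" "e < eps1" "e \<le> 1" "eta e \<le> 1" and H: "hxi N hN1 e xi \<in> Omega N ka0 e"
    and k: "1 \<le> k" "k \<le> N" and j: "1 \<le> j" "j \<le> N"
  shows "\<bar>L2inner (uk e xi k) (uk e xi j) - integral {0..1} (\<lambda>x. mk e xi k x * mk e xi j x)\<bar> \<le> 8 * eta e / e\<^sup>2"
proof -
  have ak: "\<And>x::real. x \<in> {0..1} \<Longrightarrow> \<bar>uk e xi k x - mk e xi k x\<bar> \<le> 2 * eta e / e"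
    using uk_approx[OF e(1,2,3) H k] by blast
  have aj: "\<And>x::real. x \<in> {0..1} \<Longrightarrow> \<bar>uk e xi j x - mk e xi j x\<bar> \<le> 2 * eta e / e"
    using uk_approx[OF e(1,2,3) H j] by blast
  have r: "2 * eta e / e \<le> 2 / e" using e by (simp add: divide_right_mono)
  have bk: "\<And>x::real. x \<in> {0..1} \<Longrightarrow> \<bar>uk e xi k x\<bar> \<le> 3 / e"
  proof -
    fix x :: real assume x: "x \<in> {0..1}"
    show "\<bar>uk e xi k x\<bar> \<le> 3 / e" using ak[OF x] mk_bound[OF e(1), of xi k x] r by (simp add: field_simps; linarith)
  qed
  have bj: "\<And>x::real. x \<in> {0..1} \<Longrightarrow> \<bar>uk e xi j x\<bar> \<le> 3 / e"
  proof -
    fix x :: real assume x: "x \<in> {0..1}"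
    show "\<bar>uk e xi j x\<bar> \<le> 3 / e" using aj[OF x] mk_bound[OF e(1), of xi j x] r by (simp add: field_simps; linarith)
  qed
  have meas: "(\<lambda>x. uk e xi k x * uk e xi j x) \<in> borel_measurable (lebesgue_on {0..1})"
    using uk_meas[OF e(1,2) H k] uk_meas[OF e(1,2) H j] by (rule borel_measurable_times)
  have int1: "(\<lambda>x. uk e xi k x * uk e xi j x) integrable_on {0..1}"
  proof (rule measurable_bounded_by_integrable_imp_integrable_real[OF meas, where g = "\<lambda>x. 3 / e * (3 / e)"])
    show "(\<lambda>x. 3 / e * (3 / e)) integrable_on {0..1::real}" by (rule integrable_continuous_real) simp
    fix x :: real assume x: "x \<in> {0..1}"
    show "\<bar>uk e xi k x * uk e xi j x\<bar> \<le> 3 / e * (3 / e)"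
      unfolding abs_mult using bk[OF x] bj[OF x] e(1) by (intro mult_mono) auto
  qed simp
  have int2: "(\<lambda>x. mk e xi k x * mk e xi j x) integrable_on {0..1}"
    by (rule integrable_continuous_real) (intro continuous_intros mk_cont)
  have "L2inner (uk e xi k) (uk e xi j) - integral {0..1} (\<lambda>x. mk e xi k x * mk e xi j x)
      = integral {0..1} (\<lambda>x. uk e xi k x * uk e xi j x - mk e xi k x * mk e xi j x)"
    unfolding L2inner_def by (rule integral_diff[OF int1 int2, symmetric])
  also have "\<bar>\<dots>\<bar> \<le> 8 * eta e / e\<^sup>2"
  proof (rule int01_bound)
    show "(\<lambda>x. uk e xi k x * uk e xi j x - mk e xi k x * mk e xi j x) integrable_on {0..1}"
      using int1 int2 by (rule integrable_diff)
    fix x :: real assume x: "x \<in> {0..1}"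
    let ?a = "uk e xi k x" and ?b = "mk e xi k x" and ?c = "uk e xi j x" and ?d = "mk e xi j x"
    have "?a * ?c - ?b * ?d = (?a - ?b) * ?c + ?b * (?c - ?d)" by (simp add: algebra_simps)
    then have "\<bar>?a * ?c - ?b * ?d\<bar> \<le> \<bar>?a - ?b\<bar> * \<bar>?c\<bar> + \<bar>?b\<bar> * \<bar>?c - ?d\<bar>"
      by (metis abs_mult abs_triangle_ineq)
    also have "\<dots> \<le> (2 * eta e / e) * (3 / e) + (1 / e) * (2 * eta e / e)"
      using ak[OF x] bj[OF x] mk_bound[OF e(1), of xi k x] aj[OF x] e(1)
      by (intro add_mono mult_mono) auto
    also have "\<dots> = 8 * eta e / e\<^sup>2" by (simp add: power2_eq_square field_simps)
    finally show "\<bar>?a * ?c - ?b * ?d\<bar> \<le> 8 * eta e / e\<^sup>2" .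
  qed
  finally show ?thesis .
qed

lemma sign_shift: assumes "1 \<le> k" "1 \<le> j"
  shows "(-1::real) ^ (k - 1 + (j - 1)) = (-1) ^ k * (-1) ^ j"
proof -
  obtain a where a: "k = Suc a" using assms(1) by (cases k) auto
  obtain b where b: "j = Suc b" using assms(2) by (cases j) auto
  show ?thesis unfolding a b by (simp add: power_add)
qed

lemma main_est:
  assumes e: "0 < e" "e \<le> 1" and H: "hxi N hN1 e xi \<in> Omega N ka0 e"
    and k: "1 \<le> k" "k \<le> N" and j: "1 \<le> j" "j \<le> N"
  shows "\<bar>integral {0..1} (\<lambda>x. mk e xi k x * mk e xi j x) - chiX / e * Am (k - 1) (j - 1)\<bar>
           \<le> 24 * exp (- (1/2) / rho ka0 e) / e\<^sup>2"
proof -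
  define Hh where "Hh = hxi N hN1 e xi"
  define g where "g = e / rho ka0 e"
  define th where "th = exp (- (g / 2) / e)"
  have rho_pos: "0 < rho ka0 e" using e by (simp add: rho_def)
  have g0: "0 < g" using e rho_pos by (simp add: g_def)
  have th_eq: "th = exp (- (1/2) / rho ka0 e)"
    unfolding th_def g_def using e rho_pos by (simp add: field_simps)
  have th2: "exp (- g / (2 * e)) = th" unfolding th_def by (simp add: field_simps)
  have Hk: "Hh k = xi k" "Hh j = xi j" "Hh (N + 1) = hN1 e xi" using k j by (auto simp: Hh_def hxi_def)
  have pos: "\<And>i. 1 \<le> i \<Longrightarrow> i \<le> N + 1 \<Longrightarrow> g / 2 < Hh i \<and> g / 2 < 1 - Hh i"
    using Omega_facts(1)[OF H] unfolding Hh_def g_def by blast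
  have sep: "\<And>i l. 1 \<le> i \<Longrightarrow> i < l \<Longrightarrow> l \<le> N + 1 \<Longrightarrow> g < Hh l - Hh i"
    using Omega_facts(2)[OF H] unfolding Hh_def g_def by blast
  define I where "I a b = integral {0..1} (\<lambda>x. Ud ((x - a) / e) * Ud ((x - b) / e))" for a b
  have sq: "\<bar>I (Hh i) (Hh i) - e * chiX\<bar> \<le> 8 * th" if "1 \<le> i" "i \<le> N + 1" for i
  proof -
    have "\<bar>I (Hh i) (Hh i) - e * chiX\<bar> \<le> 8 * exp (- (g / 2) / e)"
      unfolding I_def by (rule sq_est) (use e g0 pos[OF that] in auto)
    then show ?thesis by (simp add: th_def)
  qed
  have cr: "\<bar>I (Hh i) (Hh l)\<bar> \<le> 4 * th" if "1 \<le> i" "i \<le> N + 1" "1 \<le> l" "l \<le> N + 1" "i \<noteq> l" for i l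
  proof -
    have "g \<le> \<bar>Hh i - Hh l\<bar>"
    proof (cases "i < l")
      case True then show ?thesis using sep[of i l] that by auto
    next
      case False then have "l < i" using that by simp
      then show ?thesis using sep[of l i] that by auto
    qed
    then have "\<bar>I (Hh i) (Hh l)\<bar> \<le> 4 * exp (- g / (2 * e))"
      unfolding I_def by (rule cross_est[OF e(1)])
    moreover have eqg: "- g / (2 * e) = - (g / 2) / e" by simp
    ultimately show ?thesis unfolding th_def by simp
  qed
  let ?a = "xi k" and ?b = "xi j" and ?n = "hN1 e xi"
  have hint: "((\<lambda>x. Ud ((x - a) / e) * Ud ((x - b) / e)) has_integral I a b) {0..1}" for a b
    unfolding I_def by (rule integrable_integral[OF integrable_UdUd])
  define sg where "sg = (-1::real) ^ k * (-1) ^ j"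
  have sg_abs: "\<bar>sg\<bar> = 1" by (simp add: sg_def abs_mult power_abs)
  have pt: "mk e xi k x * mk e xi j x = sg / e\<^sup>2 *
      (Ud ((x - ?a) / e) * Ud ((x - ?b) / e) - Ud ((x - ?a) / e) * Ud ((x - ?n) / e)
       - Ud ((x - ?n) / e) * Ud ((x - ?b) / e) + Ud ((x - ?n) / e) * Ud ((x - ?n) / e))" for x
    unfolding mk_def sg_def using e by (simp add: field_simps power2_eq_square)
  have "((\<lambda>x. sg / e\<^sup>2 *
      (Ud ((x - ?a) / e) * Ud ((x - ?b) / e) - Ud ((x - ?a) / e) * Ud ((x - ?n) / e)
       - Ud ((x - ?n) / e) * Ud ((x - ?b) / e) + Ud ((x - ?n) / e) * Ud ((x - ?n) / e)))
     has_integral sg / e\<^sup>2 * (I ?a ?b - I ?a ?n - I ?n ?b + I ?n ?n)) {0..1}"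
    by (intro has_integral_mult_right has_integral_add has_integral_diff hint)
  then have intv: "integral {0..1} (\<lambda>x. mk e xi k x * mk e xi j x) = sg / e\<^sup>2 * (I ?a ?b - I ?a ?n - I ?n ?b + I ?n ?n)"
    unfolding pt by (rule integral_unique)
  have Am_eq: "Am (k - 1) (j - 1) = sg * ((if k = j then 1 else 0) + 1)"
  proof -
    have "(k - 1 = j - 1) = (k = j)" using k j by auto
    then show ?thesis unfolding Am_def sg_def using sign_shift[OF k(1) j(1)] by simp
  qed
  have key: "\<bar>(I ?a ?b - I ?a ?n - I ?n ?b + I ?n ?n) - e * chiX * ((if k = j then 1 else 0) + 1)\<bar> \<le> 24 * th"
  proof (cases "k = j")
    case True
    have s1: "\<bar>I ?a ?a - e * chiX\<bar> \<le> 8 * th" using sq[of k] k Hk by simp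
    have s2: "\<bar>I ?n ?n - e * chiX\<bar> \<le> 8 * th" using sq[of "N + 1"] Hk by simp
    have c1: "\<bar>I ?a ?n\<bar> \<le> 4 * th" using cr[of k "N + 1"] k Hk by simp
    have c2: "\<bar>I ?n ?a\<bar> \<le> 4 * th" using cr[of "N + 1" k] k Hk by simp
    show ?thesis using True s1 s2 c1 c2 by (simp; linarith)
  next
    case False
    have s2: "\<bar>I ?n ?n - e * chiX\<bar> \<le> 8 * th" using sq[of "N + 1"] Hk by simp
    have c0: "\<bar>I ?a ?b\<bar> \<le> 4 * th" using cr[of k j] k j Hk False by simp
    have c1: "\<bar>I ?a ?n\<bar> \<le> 4 * th" using cr[of k "N + 1"] k Hk by simp
    have c2: "\<bar>I ?n ?b\<bar> \<le> 4 * th" using cr[of "N + 1" j] j Hk by simp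
    show ?thesis using False s2 c0 c1 c2 by (simp; linarith)
  qed
  have "integral {0..1} (\<lambda>x. mk e xi k x * mk e xi j x) - chiX / e * Am (k - 1) (j - 1)
      = sg / e\<^sup>2 * ((I ?a ?b - I ?a ?n - I ?n ?b + I ?n ?n) - e * chiX * ((if k = j then 1 else 0) + 1))"
    unfolding intv Am_eq using e by (simp add: field_simps power2_eq_square)
  also have "\<bar>\<dots>\<bar> = \<bar>(I ?a ?b - I ?a ?n - I ?n ?b + I ?n ?n) - e * chiX * ((if k = j then 1 else 0) + 1)\<bar> / e\<^sup>2"
    by (simp add: abs_mult abs_div sg_abs)
  also have "\<dots> \<le> 24 * th / e\<^sup>2" using key e by (intro divide_right_mono) auto
  finally show ?thesis by (simp add: th_eq)
qed

lemma S_entry: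
  assumes e: "0 < e" "e < eps1" "e \<le> 1" "eta e \<le> 1" and H: "hxi N hN1 e xi \<in> Omega N ka0 e"
    and k: "k < N" and j: "j < N"
  shows "\<bar>Smat N beta hN1 e xi $$ (k, j) - chiX / e * Am k j\<bar>
          \<le> (24 * exp (- (1/2) / rho ka0 e) + 8 * eta e) / e\<^sup>2"
proof -
  have "Smat N beta hN1 e xi $$ (k, j) = L2inner (uk e xi (k + 1)) (uk e xi (j + 1))"
    using k j by (simp add: Smat_def)
  moreover have "\<bar>L2inner (uk e xi (k + 1)) (uk e xi (j + 1)) - integral {0..1} (\<lambda>x. mk e xi (k + 1) x * mk e xi (j + 1) x)\<bar> \<le> 8 * eta e / e\<^sup>2"
    by (rule prod_est[OF e H]) (use k j in auto)
  moreover have "\<bar>integral {0..1} (\<lambda>x. mk e xi (k + 1) x * mk e xi (j + 1) x) - chiX / e * Am (k + 1 - 1) (j + 1 - 1)\<bar>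
           \<le> 24 * exp (- (1/2) / rho ka0 e) / e\<^sup>2"
    by (rule main_est[OF e(1,3) H]) (use k j in auto)
  ultimately show ?thesis by (simp add: add_divide_distrib)
qed

lemma chiX_pos: "0 < chiX"
  by (simp add: chiX_val Finf_def)

theorem main:
  "\<exists>K c eps0. 0 < K \<and> 0 < c \<and> 0 < eps0 \<and>
    (\<forall>eps xi. 0 < eps \<and> eps < eps0 \<and> hxi N hN1 eps xi \<in> Omega N ka0 eps \<longrightarrow>
       invertible_mat (Smat N beta hN1 eps xi) \<and>
       (\<forall>T \<in> carrier_mat N N. inverts_mat (Smat N beta hN1 eps xi) T \<longrightarrow>
          (\<forall>k < N. \<forall>j < N.
             \<bar>T $$ (k, j) - eps / chiX * ((if k = j then 1 else 0)
                 + 1 / (N + 1) * (-1) ^ ((k + 1) + (j + 1) + 1))\<bar>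
             \<le> expbound ka0 K c eps)))"
proof -
  define X where "X = chiX"
  have X: "0 < X" using chiX_pos by (simp add: X_def)
  define c where "c = min (1/2) c0"
  define K where "K = 8 * real N * real N * (24 + 8 * K0) / X\<^sup>2"
  have c: "0 < c" using pos_const by (simp add: c_def)
  have K: "0 < K" using N X pos_const by (simp add: K_def)
  have NN: "0 < real N * real N" using N by simp
  have L1: "((\<lambda>e. exp (- (1/2) / e powr ka0) / e) \<longlongrightarrow> 0) (at_right 0)"
    using ka0 by real_asymp
  have L2: "((\<lambda>e. exp (- c0 / e powr ka0) / e) \<longlongrightarrow> 0) (at_right 0)"
    using ka0 pos_const by real_asymp
  define d1 where "d1 = X / (192 * real N * real N)"
  define d2 where "d2 = min (X / (64 * real N * real N * K0)) (1 / K0)"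
  have d1: "0 < d1" using X NN by (simp add: d1_def)
  have d2: "0 < d2" using X NN pos_const by (simp add: d2_def)
  have ev: "eventually (\<lambda>e. exp (- (1/2) / e powr ka0) / e < d1 \<and> exp (- c0 / e powr ka0) / e < d2) (at_right 0)"
    using order_tendstoD(2)[OF L1 d1] order_tendstoD(2)[OF L2 d2] by eventually_elim auto
  then obtain b where b: "0 < b" and bP: "\<And>e. 0 < e \<Longrightarrow> e < b \<Longrightarrow> exp (- (1/2) / e powr ka0) / e < d1 \<and> exp (- c0 / e powr ka0) / e < d2"
    unfolding eventually_at_right_field by auto
  define eps0 where "eps0 = min b (min 1 eps1)"
  have eps0: "0 < eps0" using b pos_const by (simp add: eps0_def)
  have main: "invertible_mat (Smat N beta hN1 e xi) \<and> (\<forall>T \<in> carrier_mat N N. inverts_mat (Smat N beta hN1 e xi) T \<longrightarrow>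
      (\<forall>k<N. \<forall>j<N. \<bar>T $$ (k, j) - e / chiX * ((if k = j then 1 else 0) + 1 / (N + 1) * (-1) ^ ((k + 1) + (j + 1) + 1))\<bar>
             \<le> expbound ka0 K c e))"
    if A: "0 < e \<and> e < eps0 \<and> hxi N hN1 e xi \<in> Omega N ka0 e" for e xi
  proof -
    from A have e: "0 < e" "e < eps1" "e \<le> 1" "e < b" and H: "hxi N hN1 e xi \<in> Omega N ka0 e"
      by (auto simp: eps0_def)
    have rho: "rho ka0 e = e powr ka0" by (simp add: rho_def)
    define th where "th = exp (- (1/2) / rho ka0 e)"
    define ex where "ex = exp (- c0 / rho ka0 e)"
    have eta_eq: "eta e = K0 * ex" by (simp add: expbound_def ex_def)
    have th_small: "th / e < d1" and ex_small: "ex / e < d2" using bP[OF e(1) e(4)] by (auto simp: th_def ex_def rho)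
    have th0: "0 \<le> th" "0 \<le> ex" by (simp_all add: th_def ex_def)
    have eta_le: "eta e \<le> 1"
    proof -
      have "ex \<le> ex / e" using e th0 by (simp add: le_divide_eq mult_left_le)
      then have "ex < 1 / K0" using ex_small by (simp add: d2_def)
      then show ?thesis using pos_const unfolding eta_eq by (simp add: field_simps)
    qed
    define D where "D = (24 * th + 8 * eta e) / e\<^sup>2"
    define lam where "lam = X / e"
    have lam: "0 < lam" using X e by (simp add: lam_def)
    have E: "\<And>k j. k < N \<Longrightarrow> j < N \<Longrightarrow> \<bar>Smat N beta hN1 e xi $$ (k, j) - lam * Am k j\<bar> \<le> D"
      using S_entry[OF e(1,2,3) eta_le H] unfolding D_def lam_def th_def X_def by simp
    have small: "4 * real N * real N * D \<le> lam"
    proof -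
      have a1: "24 * th / e \<le> 24 * d1" using th_small by simp
      have a2: "8 * eta e / e \<le> 8 * K0 * d2"
      proof -
        have "K0 * (ex / e) \<le> K0 * d2" using ex_small pos_const by (intro mult_left_mono) auto
        moreover have "8 * eta e / e = 8 * (K0 * (ex / e))" unfolding eta_eq by simp
        ultimately show ?thesis by linarith
      qed
      have "4 * real N * real N * D = (4 * real N * real N) * ((24 * th / e + 8 * eta e / e) / e)"
        unfolding D_def by (simp add: power2_eq_square add_divide_distrib)
      also have "\<dots> \<le> (4 * real N * real N) * ((24 * d1 + 8 * K0 * d2) / e)"
        using a1 a2 e NN by (intro mult_left_mono divide_right_mono add_mono) auto
      also have "24 * d1 + 8 * K0 * d2 \<le> X / (4 * real N * real N)"
      proof -
        have "24 * d1 = X / (8 * real N * real N)" by (simp add: d1_def)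
        moreover have "8 * K0 * d2 \<le> 8 * K0 * (X / (64 * real N * real N * K0))"
          using pos_const by (intro mult_left_mono) (auto simp: d2_def)
        moreover have "8 * K0 * (X / (64 * real N * real N * K0)) = X / (8 * real N * real N)" using pos_const by simp
        ultimately show ?thesis by simp
      qed
      then have "(4 * real N * real N) * ((24 * d1 + 8 * K0 * d2) / e) \<le> (4 * real N * real N) * ((X / (4 * real N * real N)) / e)"
        using e NN by (intro mult_left_mono divide_right_mono) auto
      also have "\<dots> = lam" using NN N by (simp add: lam_def)
      finally show ?thesis .
    qed
    have Scar: "Smat N beta hN1 e xi \<in> carrier_mat N N" by (simp add: Smat_def)
    have N0: "0 < N" using N by simp
    note MF = matrix_final[OF N0 Scar lam E small]
    have invS: "invertible_mat (Smat N beta hN1 e xi)" using MF(1) by blast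
    have bnd: "\<forall>T \<in> carrier_mat N N. inverts_mat (Smat N beta hN1 e xi) T \<longrightarrow>
      (\<forall>k<N. \<forall>j<N. \<bar>T $$ (k, j) - e / chiX * ((if k = j then 1 else 0) + 1 / (N + 1) * (-1) ^ ((k + 1) + (j + 1) + 1))\<bar>
             \<le> expbound ka0 K c e)"
    proof (intro ballI impI allI)
      fix T k j assume T: "T \<in> carrier_mat N N" and inv: "inverts_mat (Smat N beta hN1 e xi) T"
        and k: "k < N" and j: "j < N"
      have tgt: "e / chiX * ((if k = j then 1 else 0) + 1 / (N + 1) * (-1) ^ ((k + 1) + (j + 1) + 1)) = Bm N k j / lam"
        unfolding Bm_def lam_def X_def by (simp add: power_add field_simps)
      have b1: "\<bar>T $$ (k, j) - Bm N k j / lam\<bar> \<le> 8 * real N * real N * D / lam\<^sup>2" using MF(2) T inv k j by blast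
      have rpos: "0 < rho ka0 e" using e by (simp add: rho)
      have "c / rho ka0 e \<le> (1/2) / rho ka0 e" using rpos by (intro divide_right_mono) (auto simp: c_def)
      then have t1: "th \<le> exp (- c / rho ka0 e)" unfolding th_def by simp
      have "c / rho ka0 e \<le> c0 / rho ka0 e" using rpos by (intro divide_right_mono) (auto simp: c_def)
      then have t2: "ex \<le> exp (- c / rho ka0 e)" unfolding ex_def by simp
      have "8 * real N * real N * D / lam\<^sup>2 = 8 * real N * real N * (24 * th + 8 * K0 * ex) / X\<^sup>2"
        unfolding D_def lam_def eta_eq using e X by (simp add: power2_eq_square field_simps)
      also have "\<dots> \<le> 8 * real N * real N * ((24 + 8 * K0) * exp (- c / rho ka0 e)) / X\<^sup>2"
      proof -
        have k2: "K0 * ex \<le> K0 * exp (- c / rho ka0 e)" using t2 pos_const by (intro mult_left_mono) auto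
        have "(24 + 8 * K0) * exp (- c / rho ka0 e) = 24 * exp (- c / rho ka0 e) + 8 * (K0 * exp (- c / rho ka0 e))"
          by (simp add: algebra_simps)
        moreover have "8 * K0 * ex = 8 * (K0 * ex)" by simp
        ultimately have inner: "24 * th + 8 * K0 * ex \<le> (24 + 8 * K0) * exp (- c / rho ka0 e)"
          using t1 k2 by linarith
        show ?thesis using inner NN X by (intro divide_right_mono mult_left_mono) auto
      qed
      also have "\<dots> = expbound ka0 K c e" by (simp add: expbound_def K_def)
      finally show "\<bar>T $$ (k, j) - e / chiX * ((if k = j then 1 else 0) + 1 / (N + 1) * (-1) ^ ((k + 1) + (j + 1) + 1))\<bar>
             \<le> expbound ka0 K c e" using b1 tgt by simp
    qed
    show ?thesis using invS bnd by blast
  qed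
  show ?thesis
    apply (rule exI[of _ K], rule exI[of _ c], rule exI[of _ eps0])
    apply (rule conjI, rule K, rule conjI, rule c, rule conjI, rule eps0)
    apply (intro allI impI)
    apply (erule main)
    done
qed

end



theorem lemma5p10:
  fixes N :: nat and ka0 mu :: real
    and beta :: "real \<Rightarrow> (nat \<Rightarrow> real) \<Rightarrow> real \<Rightarrow> real"
    and hN1 :: "real \<Rightarrow> (nat \<Rightarrow> real) \<Rightarrow> real"
    and eps1 K0 c0 :: real
  assumes N: "N \<ge> 1"
    and ka0: "0 < ka0" "ka0 < 1"
    and mu: "-1 < mu" "mu < 1"
    and pos_const: "0 < eps1" "0 < K0" "0 < c0"
    \<comment> \<open>beta_N = ((-1)^N - 1)/2 + O(exp), continuous in x\<close>
    and beta_val: "\<And>eps h x. 0 < eps \<Longrightarrow> eps < eps1 \<Longrightarrow> h \<in> Omega N ka0 eps \<Longrightarrow> x \<in> {0..1} \<Longrightarrow>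
        \<bar>beta eps h x - ((-1) ^ N - 1) / 2\<bar> \<le> expbound ka0 K0 c0 eps"
    and beta_cont: "\<And>eps h. 0 < eps \<Longrightarrow> eps < eps1 \<Longrightarrow> h \<in> Omega N ka0 eps \<Longrightarrow>
        continuous_on {0..1} (beta eps h)"
    \<comment> \<open>derivatives of beta_N (along the manifold M_mu) are O(exp)\<close>
    and beta_deriv: "\<And>eps xi k x. 0 < eps \<Longrightarrow> eps < eps1 \<Longrightarrow> hxi N hN1 eps xi \<in> Omega N ka0 eps \<Longrightarrow>
        k \<in> {1..N} \<Longrightarrow> x \<in> {0..1} \<Longrightarrow>
        \<exists>D. ((\<lambda>t. beta eps (hxi N hN1 eps (xi(k := t))) x) has_real_derivative D) (at (xi k))
            \<and> \<bar>D\<bar> \<le> expbound ka0 K0 c0 eps"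
    \<comment> \<open>u^h(0) = -1 and homogeneous Neumann boundary conditions\<close>
    and bc0: "\<And>eps h. 0 < eps \<Longrightarrow> eps < eps1 \<Longrightarrow> h \<in> Omega N ka0 eps \<Longrightarrow> uh N beta eps h 0 = -1"
    and bcN: "\<And>eps h. 0 < eps \<Longrightarrow> eps < eps1 \<Longrightarrow> h \<in> Omega N ka0 eps \<Longrightarrow>
        (uh N beta eps h has_real_derivative 0) (at 0 within {0..1}) \<and>
        (uh N beta eps h has_real_derivative 0) (at 1 within {0..1})"
    \<comment> \<open>the map h_{N+1}(xi): u^h in M_mu iff h = (xi, h_{N+1}(xi)) in Omega\<close>
    and hN1_mass: "\<And>eps h. 0 < eps \<Longrightarrow> eps < eps1 \<Longrightarrow>
        (h \<in> Omega N ka0 eps \<and> integral {0..1} (uh N beta eps h) = mu) \<longleftrightarrow>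
        (h \<in> Omega N ka0 eps \<and> h (N + 1) = hN1 eps h)"
    and hN1_dep: "\<And>eps xi xi'. (\<forall>i\<in>{1..N}. xi i = xi' i) \<Longrightarrow> hN1 eps xi = hN1 eps xi'"
    and hN1_deriv: "\<And>eps xi k. 0 < eps \<Longrightarrow> eps < eps1 \<Longrightarrow> hxi N hN1 eps xi \<in> Omega N ka0 eps \<Longrightarrow>
        k \<in> {1..N} \<Longrightarrow>
        \<exists>D. ((\<lambda>t. hN1 eps (xi(k := t))) has_real_derivative D) (at (xi k))
            \<and> \<bar>D - (-1) ^ (N - k)\<bar> \<le> expbound ka0 K0 c0 eps"
  shows "\<exists>K c eps0. 0 < K \<and> 0 < c \<and> 0 < eps0 \<and>
    (\<forall>eps xi. 0 < eps \<and> eps < eps0 \<and> hxi N hN1 eps xi \<in> Omega N ka0 eps \<longrightarrow>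
       invertible_mat (Smat N beta hN1 eps xi) \<and>
       (\<forall>T \<in> carrier_mat N N. inverts_mat (Smat N beta hN1 eps xi) T \<longrightarrow>
          (\<forall>k < N. \<forall>j < N.
             \<bar>T $$ (k, j) - eps / chiX * ((if k = j then 1 else 0)
                 + 1 / (N + 1) * (-1) ^ ((k + 1) + (j + 1) + 1))\<bar>
             \<le> expbound ka0 K c eps)))"
  proof -
  have "LS N ka0 beta hN1 eps1 K0 c0"
    by (rule LS.intro; fact)
  then show ?thesis by (rule LS.main)
qed

end
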